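(* Let $w$ be a word of length $k$. Then for every $n \ge 2k$, $h_w(n) \ge \sum_{t=1}^{k-1} H_w(n+t)$.
   Context: Let $\Omega$ be a finite alphabet with $q\ge2$ letters; $w = w_k\dots w_1$ a word of length $k$. $h_w(n)$: number of strings of length $n$ over $\Omega$ whose last $k$ characters form $w$ and which contain $w$ as a block of $k$ consecutive characters nowhere else. $H_w(n) = q h_w(n-1) - h_w(n)$; for $n>k$ this is the number of strings of length $n$ beginning and ending with $w$ with no other occurrence of $w$. *)

theory Defs
  imports Main
begin

definition occurs_at :: "'a list \<Rightarrow> 'a list \<Rightarrow> nat \<Rightarrow> bool" where
  "occurs_at w s i \<longleftrightarrow> i + length w \<le> length s \<and> take (length w) (drop i s) = w"

definition h_w :: "'a set \<Rightarrow> 'a list \<Rightarrow> nat \<Rightarrow> nat" where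
  "h_w Omega w n = card {s. length s = n \<and> set s \<subseteq> Omega \<and>
      length w \<le> n \<and> occurs_at w s (n - length w) \<and>
      (\<forall>i. occurs_at w s i \<longrightarrow> i = n - length w)}"

definition H_w :: "'a set \<Rightarrow> 'a list \<Rightarrow> nat \<Rightarrow> int" where
  "H_w Omega w n = int (card Omega) * int (h_w Omega w (n - 1)) - int (h_w Omega w n)"

end

theory Submission imports Defs begin

definition Sset :: "'a set \<Rightarrow> 'a list \<Rightarrow> nat \<Rightarrow> 'a list set" where
  "Sset Omega w n = {s. length s = n \<and> set s \<subseteq> Omega \<and> length w \<le> n \<and>
      occurs_at w s (n - length w) \<and> (\<forall>i. occurs_at w s i \<longrightarrow> i = n - length w)}"

definition Bset :: "'a set \<Rightarrow> 'a list \<Rightarrow> nat \<Rightarrow> 'a list set" where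
  "Bset Omega w n = {s. length s = n \<and> set s \<subseteq> Omega \<and>
      occurs_at w s 0 \<and> occurs_at w s (n - length w) \<and>
      (\<forall>i. occurs_at w s i \<longrightarrow> i = 0 \<or> i = n - length w)}"

definition per :: "'a list \<Rightarrow> nat \<Rightarrow> bool" where
  "per w p \<longleftrightarrow> 0 < p \<and> p < length w \<and> (\<forall>i. i + p < length w \<longrightarrow> w ! i = w ! (i + p))"

lemma h_Sset: "h_w Omega w n = card (Sset Omega w n)"
  by (simp add: h_w_def Sset_def)

lemma fin_S: "finite Omega \<Longrightarrow> finite (Sset Omega w n)"
  by (rule finite_subset[OF _ finite_lists_length_eq[of Omega n]]) (auto simp: Sset_def)

lemma fin_B: "finite Omega \<Longrightarrow> finite (Bset Omega w n)"
  by (rule finite_subset[OF _ finite_lists_length_eq[of Omega n]]) (auto simp: Bset_def)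

lemma occ_Cons: "occurs_at w (c#v) (Suc i) = occurs_at w v i"
  by (simp add: occurs_at_def)

lemma occ_drop: "j \<le> length u \<Longrightarrow> occurs_at w (drop j u) i = occurs_at w u (j+i)"
  by (auto simp: occurs_at_def add.commute)

lemma occ0: "occurs_at w u 0 \<Longrightarrow> take (length w) u = w"
  by (simp add: occurs_at_def)

lemma S_k: assumes "set w \<subseteq> Omega" shows "Sset Omega w (length w) = {w}"
proof
  show "Sset Omega w (length w) \<subseteq> {w}"
    by (auto simp: Sset_def occurs_at_def)
  show "{w} \<subseteq> Sset Omega w (length w)"
    using assms by (auto simp: Sset_def occurs_at_def)
qed

lemma factA:
  assumes fin: "finite Omega" and M: "length w + 1 \<le> M"
  shows "card Omega * card (Sset Omega w (M - 1)) = card (Sset Omega w M) + card (Bset Omega w M)"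
proof -
  let ?k = "length w"
  let ?f = "\<lambda>(c, v). c # (v::'a list)"
  have inj: "inj_on ?f (Omega \<times> Sset Omega w (M - 1))"
    by (auto simp: inj_on_def)
  have eq: "?f ` (Omega \<times> Sset Omega w (M - 1)) = Sset Omega w M \<union> Bset Omega w M"
  proof
    show "?f ` (Omega \<times> Sset Omega w (M - 1)) \<subseteq> Sset Omega w M \<union> Bset Omega w M"
    proof clarify
      fix c v assume c: "c \<in> Omega" and v: "v \<in> Sset Omega w (M - 1)"
        and nb: "c # v \<notin> Bset Omega w M"
      have lv: "length v = M - 1" and sv: "set v \<subseteq> Omega"
        and ov: "occurs_at w v (M - 1 - ?k)"
        and uv: "\<And>i. occurs_at w v i \<Longrightarrow> i = M - 1 - ?k"
        using v by (auto simp: Sset_def)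
      have e: "M - ?k = Suc (M - 1 - ?k)" using M by simp
      have o1: "occurs_at w (c#v) (M - ?k)" using ov e occ_Cons by metis
      have u1: "occurs_at w (c#v) i \<Longrightarrow> i = 0 \<or> i = M - ?k" for i
      proof (cases i)
        case (Suc j) assume "occurs_at w (c#v) i"
        then have "occurs_at w v j" using Suc occ_Cons by metis
        then show ?thesis using uv e Suc by simp
      qed simp
      show "c # v \<in> Sset Omega w M"
      proof -
        have "\<not> occurs_at w (c#v) 0"
          using nb o1 u1 lv c sv M by (auto simp: Bset_def)
        then show ?thesis using o1 u1 lv c sv M by (auto simp: Sset_def)
      qed
    qed
    show "Sset Omega w M \<union> Bset Omega w M \<subseteq> ?f ` (Omega \<times> Sset Omega w (M - 1))"
    proof
      fix s assume s: "s \<in> Sset Omega w M \<union> Bset Omega w M"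
      have ls: "length s = M" and ss: "set s \<subseteq> Omega" and os: "occurs_at w s (M - ?k)"
        and us: "\<And>i. occurs_at w s i \<Longrightarrow> i = 0 \<or> i = M - ?k"
        using s by (auto simp: Sset_def Bset_def)
      obtain c v where sc: "s = c # v" using ls M by (cases s) auto
      have e: "M - ?k = Suc (M - 1 - ?k)" using M by simp
      have "v \<in> Sset Omega w (M - 1)"
      proof -
        have "occurs_at w v (M - 1 - ?k)" using os e sc by (simp add: occ_Cons)
        moreover have "occurs_at w v i \<Longrightarrow> i = M - 1 - ?k" for i
        proof -
          assume "occurs_at w v i"
          then have "occurs_at w s (Suc i)" using sc by (simp add: occ_Cons)
          then have "Suc i = 0 \<or> Suc i = M - ?k" by (rule us)
          then have "Suc i = M - ?k" by simp
          then show ?thesis using e by simp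
        qed
        moreover have "length v = M - 1" using ls sc by simp
        moreover have "set v \<subseteq> Omega" using ss sc by simp
        moreover have "?k \<le> M - 1" using M by simp
        ultimately show ?thesis unfolding Sset_def by blast
      qed
      moreover have "c \<in> Omega" using ss sc by auto
      ultimately show "s \<in> ?f ` (Omega \<times> Sset Omega w (M - 1))" using sc by auto
    qed
  qed
  have disj: "Sset Omega w M \<inter> Bset Omega w M = {}"
    using M by (auto simp: Sset_def Bset_def)
  have "card Omega * card (Sset Omega w (M - 1)) = card (Omega \<times> Sset Omega w (M - 1))"
    by (simp add: card_cartesian_product)
  also have "\<dots> = card (?f ` (Omega \<times> Sset Omega w (M - 1)))"
    using card_image[OF inj] by simp
  also have "\<dots> = card (Sset Omega w M) + card (Bset Omega w M)"
    using eq disj card_Un_disjoint[OF fin_S[OF fin] fin_B[OF fin]] by simp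
  finally show ?thesis .
qed


lemma drop_in_S:
  assumes u: "u \<in> Bset Omega w M" and j: "1 \<le> j" "j + length w \<le> M"
  shows "drop j u \<in> Sset Omega w (M - j)"
proof -
  let ?k = "length w"
  have lu: "length u = M" and su: "set u \<subseteq> Omega" and ou: "occurs_at w u (M - ?k)"
    and uu: "\<And>i. occurs_at w u i \<Longrightarrow> i = 0 \<or> i = M - ?k"
    using u by (auto simp: Bset_def)
  have jl: "j \<le> length u" using lu j by simp
  have "occurs_at w (drop j u) (M - j - ?k)"
  proof -
    have "j + (M - j - ?k) = M - ?k" using j by simp
    then show ?thesis using occ_drop[OF jl] ou by simp
  qed
  moreover have "occurs_at w (drop j u) i \<Longrightarrow> i = M - j - ?k" for i
  proof -
    assume "occurs_at w (drop j u) i"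
    then have "occurs_at w u (j + i)" using occ_drop[OF jl] by simp
    then have "j + i = 0 \<or> j + i = M - ?k" by (rule uu)
    then show ?thesis using j by simp
  qed
  moreover have "length (drop j u) = M - j" using lu by simp
  moreover have "set (drop j u) \<subseteq> Omega" using su by (meson order_trans set_drop_subset)
  moreover have "?k \<le> M - j" using j by simp
  ultimately show ?thesis unfolding Sset_def by blast
qed

lemma per_drop_take: "per w P \<Longrightarrow> drop P w = take (length w - P) w"
  by (rule nth_equalityI) (auto simp: per_def add.commute)

lemma cross:
  assumes u1: "u1 \<in> Bset Omega w (m + length w)" and u2: "u2 \<in> Bset Omega w (m + length w - P)"
    and P: "per w P" and m: "length w \<le> m"
    and eq: "drop (length w) u1 = drop (length w - P) u2"
  shows False
proof -
  let ?k = "length w"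
  define v where "v = drop ?k u1"
  have P1: "0 < P" "P < ?k" using P by (auto simp: per_def)
  have l1: "length u1 = m + ?k" and o1: "occurs_at w u1 0"
    and uu: "\<And>i. occurs_at w u1 i \<Longrightarrow> i = 0 \<or> i = m + ?k - ?k"
    using u1 by (auto simp: Bset_def)
  have l2: "length u2 = m + ?k - P" and o2: "occurs_at w u2 0"
    using u2 by (auto simp: Bset_def)
  have t1: "take ?k u1 = w" using occ0[OF o1] .
  have t2: "take ?k u2 = w" using occ0[OF o2] .
  have U1: "u1 = w @ v" using t1 v_def by (metis append_take_drop_id)
  have "u2 = take (?k - P) u2 @ v" using eq v_def by (metis append_take_drop_id)
  moreover have "take (?k - P) u2 = take (?k - P) w"
    using t2 by (metis min.absorb1 diff_le_self take_take)
  ultimately have U2: "u2 = take (?k - P) w @ v" by simp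
  have lt: "length (take (?k - P) w) = ?k - P" using P1 by simp
  have "take ?k u2 = take (?k - P) w @ take P v"
    using U2 lt P1 by (simp add: take_append)
  then have tv: "take P v = drop (?k - P) w" using t2
    by (metis append_eq_append_conv append_take_drop_id length_take lt)
  have "take ?k (drop P u1) = drop P w @ take P v"
    using U1 P1 by (simp add: take_append)
  also have "\<dots> = take (?k - P) w @ drop (?k - P) w"
    using per_drop_take[OF P] tv by simp
  also have "\<dots> = w" by simp
  finally have "occurs_at w u1 P" using l1 P1 m by (simp add: occurs_at_def)
  then have "P = 0 \<or> P = m + ?k - ?k" by (rule uu)
  then show False using P1 m by simp
qed

lemma eq_parts: "take n x = take n y \<Longrightarrow> drop n x = drop n y \<Longrightarrow> x = y"
  by (metis append_take_drop_id)

lemma factC2: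
  assumes fin: "finite Omega" and P: "per w P" and m: "length w \<le> m"
  shows "card (Bset Omega w (m + length w)) + card (Bset Omega w (m + length w - P))
           \<le> card (Sset Omega w m)"
proof -
  let ?k = "length w"
  let ?B1 = "Bset Omega w (m + ?k)" and ?B2 = "Bset Omega w (m + ?k - P)"
  have P1: "0 < P" "P < ?k" using P by (auto simp: per_def)
  let ?g = "\<lambda>u. drop (length u - m) u"
  have len1: "u \<in> ?B1 \<Longrightarrow> length u = m + ?k" for u by (simp add: Bset_def)
  have len2: "u \<in> ?B2 \<Longrightarrow> length u = m + ?k - P" for u by (simp add: Bset_def)
  have disj: "?B1 \<inter> ?B2 = {}"
  proof (rule ccontr)
    assume "?B1 \<inter> ?B2 \<noteq> {}"
    then obtain u where "u \<in> ?B1" "u \<in> ?B2" by blast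
    then have "m + ?k = m + ?k - P" using len1 len2 by metis
    then show False using P1 by simp
  qed
  have g1: "?g u = drop ?k u" if "u \<in> ?B1" for u
  proof -
    have "length u - m = ?k" using len1[OF that] by simp
    then show ?thesis by simp
  qed
  have g2: "?g u = drop (?k - P) u" if "u \<in> ?B2" for u
  proof -
    have "length u - m = ?k - P" using len2[OF that] P1 by simp
    then show ?thesis by simp
  qed
  have tk1: "take ?k u = w" if "u \<in> ?B1" for u
    using that unfolding Bset_def by (intro occ0) blast
  have tk2: "take ?k u = w" if "u \<in> ?B2" for u
    using that unfolding Bset_def by (intro occ0) blast
  have inj: "inj_on ?g (?B1 \<union> ?B2)"
  proof (rule inj_onI)
    fix x y assume x: "x \<in> ?B1 \<union> ?B2" and y: "y \<in> ?B1 \<union> ?B2" and e: "?g x = ?g y"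
    show "x = y"
    proof (cases "x \<in> ?B1")
      case True
      show ?thesis
      proof (cases "y \<in> ?B1")
        case True
        have "drop ?k x = drop ?k y" using e g1[OF \<open>x \<in> ?B1\<close>] g1[OF True] by simp
        moreover have "take ?k x = take ?k y" using tk1[OF \<open>x \<in> ?B1\<close>] tk1[OF True] by simp
        ultimately show ?thesis by (rule eq_parts[rotated])
      next
        case False
        then have "y \<in> ?B2" using y by simp
        have "drop ?k x = drop (?k - P) y" using e g1[OF True] g2[OF \<open>y \<in> ?B2\<close>] by simp
        then show ?thesis using cross[OF True \<open>y \<in> ?B2\<close> P m] by blast
      qed
    next
      case False
      then have xb: "x \<in> ?B2" using x by simp
      show ?thesis
      proof (cases "y \<in> ?B1")
        case True
        have "drop ?k y = drop (?k - P) x" using e g1[OF True] g2[OF xb] by simp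
        then show ?thesis using cross[OF True xb P m] by blast
      next
        case False
        then have yb: "y \<in> ?B2" using y by simp
        have "take (?k - P) x = take (?k - P) y"
          using tk2[OF xb] tk2[OF yb] by (metis min.absorb1 diff_le_self take_take)
        moreover have "drop (?k - P) x = drop (?k - P) y" using e g2[OF xb] g2[OF yb] by simp
        ultimately show ?thesis by (rule eq_parts)
      qed
    qed
  qed
  have sub: "?g ` (?B1 \<union> ?B2) \<subseteq> Sset Omega w m"
  proof
    fix s assume "s \<in> ?g ` (?B1 \<union> ?B2)"
    then obtain u where u: "u \<in> ?B1 \<union> ?B2" and s: "s = ?g u" by blast
    show "s \<in> Sset Omega w m"
    proof (cases "u \<in> ?B1")
      case True
      have "drop ?k u \<in> Sset Omega w (m + ?k - ?k)"
        by (rule drop_in_S[OF True]) (use P1 m in auto)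
      then show ?thesis using s g1 True by simp
    next
      case False
      then have ub: "u \<in> ?B2" using u by simp
      have "drop (?k - P) u \<in> Sset Omega w (m + ?k - P - (?k - P))"
        by (rule drop_in_S[OF ub]) (use P1 m in auto)
      moreover have "m + ?k - P - (?k - P) = m" using P1 by simp
      ultimately show ?thesis using s g2 ub by simp
    qed
  qed
  have "card ?B1 + card ?B2 = card (?B1 \<union> ?B2)"
    using card_Un_disjoint[OF fin_B[OF fin] fin_B[OF fin] disj] by simp
  also have "\<dots> = card (?g ` (?B1 \<union> ?B2))" using card_image[OF inj] by simp
  also have "\<dots> \<le> card (Sset Omega w m)" by (rule card_mono[OF fin_S[OF fin] sub])
  finally show ?thesis .
qed

lemma factC1:
  assumes fin: "finite Omega" and m: "length w \<le> m" and k: "1 \<le> length w"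
  shows "card (Bset Omega w (m + length w)) \<le> card (Sset Omega w m)"
proof -
  let ?k = "length w"
  let ?B1 = "Bset Omega w (m + ?k)"
  have inj: "inj_on (drop ?k) ?B1"
  proof (rule inj_onI)
    fix x y assume x: "x \<in> ?B1" and y: "y \<in> ?B1" and e: "drop ?k x = drop ?k y"
    have "take ?k x = w" using x unfolding Bset_def by (intro occ0) blast
    moreover have "take ?k y = w" using y unfolding Bset_def by (intro occ0) blast
    ultimately have "take ?k x = take ?k y" by simp
    then show "x = y" using e by (rule eq_parts)
  qed
  have sub: "drop ?k ` ?B1 \<subseteq> Sset Omega w m"
  proof
    fix s assume "s \<in> drop ?k ` ?B1"
    then obtain u where u: "u \<in> ?B1" and s: "s = drop ?k u" by blast
    have "drop ?k u \<in> Sset Omega w (m + ?k - ?k)"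
      by (rule drop_in_S[OF u]) (use k m in auto)
    then show "s \<in> Sset Omega w m" using s by simp
  qed
  have "card ?B1 = card (drop ?k ` ?B1)" using card_image[OF inj] by simp
  also have "\<dots> \<le> card (Sset Omega w m)" by (rule card_mono[OF fin_S[OF fin] sub])
  finally show ?thesis .
qed

lemma B_per:
  assumes u: "u \<in> Bset Omega w (length w + r)" and r: "0 < r" "r < length w"
  shows "per w r"
proof -
  let ?k = "length w"
  have t1: "take ?k u = w" by (rule occ0) (use u in \<open>simp add: Bset_def\<close>)
  have "occurs_at w u r" using u by (simp add: Bset_def)
  then have t2: "take ?k (drop r u) = w" by (simp add: occurs_at_def)
  have lu: "length u = ?k + r" using u by (simp add: Bset_def)
  have "w ! i = w ! (i + r)" if i: "i + r < ?k" for i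
  proof -
    have "w ! i = take ?k (drop r u) ! i" using t2 by simp
    also have "\<dots> = u ! (r + i)" using i lu by simp
    also have "\<dots> = take ?k u ! (i + r)" using i by (simp add: add.commute)
    also have "\<dots> = w ! (i + r)" using t1 by simp
    finally show ?thesis .
  qed
  then show ?thesis using r by (simp add: per_def)
qed

lemma per_add:
  assumes p: "per w p" and r: "per w r" and s: "p + r < length w"
  shows "per w (p + r)"
proof -
  have "w ! i = w ! (i + (p + r))" if i: "i + (p + r) < length w" for i
  proof -
    have "w ! i = w ! (i + p)" using p i unfolding per_def by simp
    also have "\<dots> = w ! (i + p + r)" using r i unfolding per_def by (simp add: add.assoc)
    finally show ?thesis by (simp add: add.assoc)
  qed
  then show ?thesis using p s unfolding per_def by simp
qed

lemma per_max:
  assumes "per w r" and P: "P = Max {p. per w p}"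
  shows "length w \<le> r + P"
proof (rule ccontr)
  assume "\<not> length w \<le> r + P"
  have fin: "finite {p. per w p}" by (rule finite_subset[of _ "{..<length w}"]) (auto simp: per_def)
  have "per w P" using P fin assms(1) Max_in[of "{p. per w p}"] by auto
  have "per w (P + r)" using per_add[OF \<open>per w P\<close> assms(1)] \<open>\<not> length w \<le> r + P\<close> by simp
  then have "P + r \<le> P" unfolding P using fin Max_ge by blast
  then show False using assms(1) by (simp add: per_def)
qed


lemma sum_shift1:
  fixes f :: "nat \<Rightarrow> int"
  shows "(\<Sum>t\<in>{1..<Suc k}. f (Suc t)) = (\<Sum>t\<in>{1..<Suc k}. f t) - f 1 + f (Suc k)"
  by (induction k) (simp_all add: sum.op_ivl_Suc)

lemma HB:
  assumes fin: "finite Omega" and M: "length w + 1 \<le> M"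
  shows "H_w Omega w M = int (card (Bset Omega w M))"
proof -
  have "card Omega * card (Sset Omega w (M - 1)) = card (Sset Omega w M) + card (Bset Omega w M)"
    by (rule factA[OF fin M])
  then have "int (card Omega) * int (card (Sset Omega w (M - 1)))
      = int (card (Sset Omega w M)) + int (card (Bset Omega w M))"
    by (metis of_nat_add of_nat_mult)
  then show ?thesis by (simp add: H_w_def h_Sset)
qed

theorem corollary4p6:
  fixes Omega :: "'a set" and w :: "'a list" and n :: nat
  assumes "finite Omega" and "card Omega \<ge> 2" and "set w \<subseteq> Omega"
    and "n \<ge> 2 * length w"
  shows "int (h_w Omega w n) \<ge> (\<Sum>t\<in>{1..<length w}. H_w Omega w (n + t))"
proof (cases "length w \<le> 1")
  case True
  then have "{1..<length w} = {}" by auto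
  then show ?thesis by simp
next
  case False
  let ?k = "length w"
  let ?q = "card Omega"
  have fin: "finite Omega" using assms(1) .
  have k2: "2 \<le> ?k" using False by simp
  define sl where "sl m = int (h_w Omega w m) - (\<Sum>t\<in>{1..<?k}. H_w Omega w (m + t))" for m
  define inc where "inc m = (int ?q - 1) * int (h_w Omega w m) - H_w Omega w (m + ?k)" for m
  have step: "sl (Suc m) = sl m + inc m" for m
  proof -
    obtain k' where k': "?k = Suc k'" using k2 by (cases ?k) auto
    have "(\<Sum>t\<in>{1..<?k}. H_w Omega w (Suc m + t))
        = (\<Sum>t\<in>{1..<?k}. H_w Omega w (m + Suc t))" by simp
    also have "\<dots> = (\<Sum>t\<in>{1..<?k}. H_w Omega w (m + t)) - H_w Omega w (m + 1) + H_w Omega w (m + ?k)"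
      using sum_shift1[of "\<lambda>t. H_w Omega w (m + t)" k'] k' by simp
    finally have e: "(\<Sum>t\<in>{1..<?k}. H_w Omega w (Suc m + t))
        = (\<Sum>t\<in>{1..<?k}. H_w Omega w (m + t)) - H_w Omega w (m + 1) + H_w Omega w (m + ?k)" .
    have "H_w Omega w (m + 1) = int ?q * int (h_w Omega w m) - int (h_w Omega w (Suc m))"
      by (simp add: H_w_def)
    then show ?thesis unfolding sl_def inc_def e by (simp add: algebra_simps)
  qed
  have slsum: "sl (?k + d) = sl ?k + (\<Sum>m\<in>{?k..<?k + d}. inc m)" for d
  proof (induction d)
    case 0 then show ?case by simp
  next
    case (Suc d)
    have "sl (?k + Suc d) = sl (?k + d) + inc (?k + d)" using step[of "?k + d"] by simp
    then show ?case using Suc by simp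
  qed
  have hk: "h_w Omega w ?k = 1" using S_k[OF assms(3)] by (simp add: h_Sset)
  have slk: "sl ?k = 1 - (\<Sum>t\<in>{1..<?k}. H_w Omega w (?k + t))"
    unfolding sl_def hk by simp
  have Hkt: "H_w Omega w (?k + t) = int (card (Bset Omega w (?k + t)))" if "1 \<le> t" for t
    using HB[OF fin] that by simp
  have Hnn: "0 \<le> H_w Omega w M" if "?k + 1 \<le> M" for M
    using HB[OF fin that] by simp
  have hB: "int (card (Bset Omega w (m + ?k))) \<le> int (h_w Omega w m)" if "?k \<le> m" for m
    using factC1[OF fin that] k2 by (simp add: h_Sset)
  have inc_nn: "0 \<le> inc m" if "?k \<le> m" for m
  proof -
    have "H_w Omega w (m + ?k) = int (card (Bset Omega w (m + ?k)))"
      using HB[OF fin] that k2 by simp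
    moreover have "int (h_w Omega w m) \<le> (int ?q - 1) * int (h_w Omega w m)"
      using assms(2) by (simp add: mult_le_cancel_right1)
    ultimately show ?thesis using hB[OF that] unfolding inc_def by linarith
  qed
  define d where "d = n - ?k"
  have d: "n = ?k + d" using assms(4) unfolding d_def by simp
  have dk: "?k \<le> d" using assms(4) unfolding d_def by simp
  have sumnn: "0 \<le> (\<Sum>m\<in>{?k..<?k + d}. inc m)"
    by (rule sum_nonneg) (use inc_nn in auto)
  show ?thesis
  proof (cases "\<exists>p. per w p")
    case False
    have "H_w Omega w (?k + t) = 0" if "t \<in> {1..<?k}" for t
    proof -
      have "Bset Omega w (?k + t) = {}"
        using B_per[of _ Omega w t] that False by auto
      then show ?thesis using Hkt that by simp
    qed
    then have "sl ?k = 1" using slk by simp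
    then have "0 \<le> sl n" using slsum[of d] d sumnn by simp
    then show ?thesis unfolding sl_def by simp
  next
    case True
    define P where "P = Max {p. per w p}"
    have finP: "finite {p. per w p}" by (rule finite_subset[of _ "{..<?k}"]) (auto simp: per_def)
    have perP: "per w P" using True finP Max_in[of "{p. per w p}"] unfolding P_def by auto
    have P1: "0 < P" "P < ?k" using perP by (auto simp: per_def)
    have incP: "H_w Omega w (m + ?k - P) \<le> inc m" if "?k \<le> m" for m
    proof -
      have e1: "H_w Omega w (m + ?k) = int (card (Bset Omega w (m + ?k)))"
        using HB[OF fin] that k2 by simp
      have e2: "H_w Omega w (m + ?k - P) = int (card (Bset Omega w (m + ?k - P)))"
        using HB[OF fin] that P1 by simp
      have c: "card (Bset Omega w (m + ?k)) + card (Bset Omega w (m + ?k - P)) \<le> card (Sset Omega w m)"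
        by (rule factC2[OF fin perP that])
      have "int (h_w Omega w m) \<le> (int ?q - 1) * int (h_w Omega w m)"
        using assms(2) by (simp add: mult_le_cancel_right1)
      then show ?thesis using c e1 e2 unfolding inc_def h_Sset by linarith
    qed
    have s1: "(\<Sum>m\<in>{?k..<?k + (?k - 1)}. inc m) \<le> (\<Sum>m\<in>{?k..<?k + d}. inc m)"
      by (rule sum_mono2) (use dk inc_nn in auto)
    have s2: "(\<Sum>m\<in>{?k..<?k + (?k - 1)}. H_w Omega w (m + ?k - P)) \<le> (\<Sum>m\<in>{?k..<?k + (?k - 1)}. inc m)"
      by (rule sum_mono) (use incP in auto)
    have sub: "(\<lambda>r. r + P) ` {?k - P..<?k} \<subseteq> {?k..<?k + (?k - 1)}" using P1 by auto
    have s3: "(\<Sum>m\<in>(\<lambda>r. r + P) ` {?k - P..<?k}. H_w Omega w (m + ?k - P))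
        \<le> (\<Sum>m\<in>{?k..<?k + (?k - 1)}. H_w Omega w (m + ?k - P))"
      by (rule sum_mono2[OF _ sub]) (use Hnn P1 in auto)
    have s4: "(\<Sum>m\<in>(\<lambda>r. r + P) ` {?k - P..<?k}. H_w Omega w (m + ?k - P))
        = (\<Sum>r\<in>{?k - P..<?k}. H_w Omega w (?k + r))"
      by (subst sum.reindex) (auto simp: inj_on_def add.commute)
    have s5: "(\<Sum>t\<in>{1..<?k}. H_w Omega w (?k + t)) = (\<Sum>t\<in>{?k - P..<?k}. H_w Omega w (?k + t))"
    proof (rule sum.mono_neutral_right)
      show "finite {1..<?k}" by simp
      show "{?k - P..<?k} \<subseteq> {1..<?k}" using P1 by auto
      show "\<forall>i\<in>{1..<?k} - {?k - P..<?k}. H_w Omega w (?k + i) = 0"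
      proof
        fix t assume t: "t \<in> {1..<?k} - {?k - P..<?k}"
        have "Bset Omega w (?k + t) = {}"
        proof (rule ccontr)
          assume "Bset Omega w (?k + t) \<noteq> {}"
          then obtain u where "u \<in> Bset Omega w (?k + t)" by blast
          then have "per w t" by (rule B_per) (use t in auto)
          then have "?k \<le> t + P" by (rule per_max) (simp add: P_def)
          then show False using t by auto
        qed
        then show "H_w Omega w (?k + t) = 0" using Hkt t by simp
      qed
    qed
    have "sl n = sl (?k + d)" using d by simp
    then have "0 \<le> sl n" using slsum[of d] slk s1 s2 s3 s4 s5 by linarith
    then show ?thesis unfolding sl_def by simp
  qed
qed

end
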